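(* Let $0<q<1$, $\beta\in\mathbb{C}$ and $n\ge 0$ an integer, and set $a=q^{-n/2+1/4}\beta$. Let $\tau$ be the divided difference operator acting on polynomials in $x=(z+z^{-1})/2$ by $$(\tau f)(z)=\frac{f(q^{1/2}z)-f(q^{-1/2}z)}{z-z^{-1}} .$$ Then $$\sum_{k=0}^\infty\frac{q^{k^2/4}\beta^k}{(q;q)_k}\,\tau^k\,H_n(x|q)=H_n(x;a|q),$$ where the sum is finite since $\tau$ lowers polynomial degree in $x$.
   Context: $(a;q)_0=1$, $(a;q)_k=\prod_{j=0}^{k-1}(1-aq^j)$, $\begin{bmatrix} n\\ k\end{bmatrix}_q=\frac{(q;q)_n}{(q;q)_k(q;q)_{n-k}}$. With $x=\cos\theta$, $z=e^{i\theta}$, the continuous $q$-Hermite polynomials are $H_n(x|q)=\sum_{k=0}^n\begin{bmatrix} n\\ k\end{bmatrix}_q e^{i(n-2k)\theta}$, and the continuous big $q$-Hermite polynomials are $$H_n(x;a|q)=e^{in\theta}\,{}_2\phi_0\big(q^{-n},ae^{i\theta};-;q;q^ne^{-2i\theta}\big)=e^{in\theta}\sum_{k=0}^n\frac{(q^{-n};q)_k(ae^{i\theta};q)_k}{(q;q)_k}(-1)^kq^{-k(k-1)/2}\big(q^ne^{-2i\theta}\big)^k .$$ *)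

theory Defs
  imports Complex_Main
begin

definition qpoch :: "complex \<Rightarrow> complex \<Rightarrow> nat \<Rightarrow> complex" where
  "qpoch a q k = (\<Prod>j<k. (1 - a * q ^ j))"

definition qbinom :: "complex \<Rightarrow> nat \<Rightarrow> nat \<Rightarrow> complex" where
  "qbinom q n k = qpoch q q n / (qpoch q q k * qpoch q q (n - k))"

text \<open>Continuous q-Hermite polynomial H_n(x|q), written as a Laurent polynomial
  in z = e^{i theta}, x = (z + z^{-1})/2.\<close>
definition Hcont :: "nat \<Rightarrow> real \<Rightarrow> complex \<Rightarrow> complex" where
  "Hcont n q z = (\<Sum>k=0..n. qbinom (complex_of_real q) n k * z powi (int n - 2 * int k))"

text \<open>Continuous big q-Hermite polynomial H_n(x;a|q) via its 2phi0 representation.\<close>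
definition Hbig :: "nat \<Rightarrow> complex \<Rightarrow> real \<Rightarrow> complex \<Rightarrow> complex" where
  "Hbig n a q z = z ^ n * (\<Sum>k=0..n.
      qpoch (inverse (complex_of_real q ^ n)) (complex_of_real q) k
      * qpoch (a * z) (complex_of_real q) k / qpoch (complex_of_real q) (complex_of_real q) k
      * (-1) ^ k * inverse (complex_of_real q ^ (k * (k - 1) div 2))
      * (complex_of_real q ^ n * inverse (z ^ 2)) ^ k)"

definition tau :: "real \<Rightarrow> (complex \<Rightarrow> complex) \<Rightarrow> complex \<Rightarrow> complex" where
  "tau q f z = (f (complex_of_real (sqrt q) * z) - f (z / complex_of_real (sqrt q))) / (z - inverse z)"

end

theory Submission
  imports Defs
begin


fun gb :: "complex \<Rightarrow> nat \<Rightarrow> nat \<Rightarrow> complex" where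
  "gb x 0 k = (if k = 0 then 1 else 0)"
| "gb x (Suc n) 0 = 1"
| "gb x (Suc n) (Suc k) = gb x n (Suc k) + x ^ (n - k) * gb x n k"

lemma gb_zero: "n < k \<Longrightarrow> gb x n k = 0"
proof (induction n arbitrary: k)
  case 0 then show ?case by simp
next
  case (Suc n) then show ?case by (cases k) auto
qed

lemma qpoch_Suc: "qpoch a q (Suc k) = qpoch a q k * (1 - a * q ^ k)"
  by (simp add: qpoch_def)

lemma qpoch_0[simp]: "qpoch a q 0 = 1"
  by (simp add: qpoch_def)

lemma gb_fact: "k \<le> n \<Longrightarrow> gb x n k * qpoch x x k * qpoch x x (n - k) = qpoch x x n"
proof (induction n arbitrary: k)
  case 0 then show ?case by simp
next
  case (Suc n)
  show ?case
  proof (cases k)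
    case 0 then show ?thesis by simp
  next
    case (Suc k')
    have k': "k' \<le> n" using Suc.prems Suc by simp
    have A0: "x ^ (n - k') * gb x n k' * qpoch x x (Suc k') * qpoch x x (n - k')
        = x ^ (n - k') * (1 - x ^ Suc k') * (gb x n k' * qpoch x x k' * qpoch x x (n - k'))"
      by (simp add: qpoch_Suc algebra_simps)
    have A: "x ^ (n - k') * gb x n k' * qpoch x x (Suc k') * qpoch x x (n - k')
        = x ^ (n - k') * (1 - x ^ Suc k') * qpoch x x n"
      using A0 Suc.IH[OF k'] by simp
    have B: "gb x n (Suc k') * qpoch x x (Suc k') * qpoch x x (n - k')
        = (1 - x ^ (n - k')) * qpoch x x n"
    proof (cases "k' = n")
      case True then show ?thesis by (simp add: gb_zero)
    next
      case False
      then have le: "Suc k' \<le> n" using k' by simp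
      have e: "n - k' = Suc (n - Suc k')" using le by simp
      have "gb x n (Suc k') * qpoch x x (Suc k') * qpoch x x (n - k')
         = (1 - x ^ (n - k')) * (gb x n (Suc k') * qpoch x x (Suc k') * qpoch x x (n - Suc k'))"
        unfolding e by (simp add: qpoch_Suc algebra_simps)
      then show ?thesis
        using Suc.IH[OF le] by simp
    qed
    have C: "x ^ (n - k') * x ^ Suc k' = x ^ Suc n"
      using k' by (simp add: power_add[symmetric])
    have "gb x (Suc n) k * qpoch x x k * qpoch x x (Suc n - k)
       = gb x n (Suc k') * qpoch x x (Suc k') * qpoch x x (n - k')
         + x ^ (n - k') * gb x n k' * qpoch x x (Suc k') * qpoch x x (n - k')"
      unfolding Suc by (simp add: algebra_simps)
    also have "\<dots> = (1 - x ^ (n - k')) * qpoch x x n + x ^ (n - k') * (1 - x ^ Suc k') * qpoch x x n"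
      using A B by simp
    also have "\<dots> = qpoch x x n * (1 - x ^ (n - k') * x ^ Suc k')"
      by (simp add: algebra_simps)
    also have "\<dots> = qpoch x x (Suc n)" using C by (simp add: qpoch_Suc)
    finally show ?thesis .
  qed
qed

lemma qp_nz:
  assumes "0 < q" "q < 1"
  shows "qpoch (complex_of_real q) (complex_of_real q) k \<noteq> 0"
proof -
  have "\<And>j. (1 - complex_of_real q * complex_of_real q ^ j) \<noteq> 0"
  proof
    fix j assume "1 - complex_of_real q * complex_of_real q ^ j = 0"
    then have "complex_of_real (q ^ Suc j) = 1" by simp
    then have "q ^ Suc j = 1" using of_real_eq_1_iff by blast
    moreover have "q ^ Suc j < 1" using assms by (rule power_Suc_less_one)
    ultimately show False by simp
  qed
  then show ?thesis by (simp add: qpoch_def)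
qed

lemma gb_eq:
  assumes "0 < q" "q < 1" "k \<le> n"
  shows "gb (complex_of_real q) n k = qpoch (complex_of_real q) (complex_of_real q) n /
     (qpoch (complex_of_real q) (complex_of_real q) k * qpoch (complex_of_real q) (complex_of_real q) (n - k))"
  using gb_fact[OF assms(3), of "complex_of_real q"] qp_nz[OF assms(1,2)]
  by (simp add: field_simps)

lemma qbinom_gb:
  assumes "0 < q" "q < 1" "k \<le> n"
  shows "qbinom (complex_of_real q) n k = gb (complex_of_real q) n k"
  using gb_eq[OF assms] by (simp add: qbinom_def)



lemma powi_lemma:
  fixes z :: complex
  assumes "z \<noteq> 0"
  shows "z powi (int n - 2 * int k) = z ^ n * inverse z ^ (2 * k)"
proof -
  have i: "2 * int k = int (2 * k)" by simp
  have "z powi (int n - 2 * int k) = z powi (int n) / z powi (int (2 * k))"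
    unfolding i using assms by (rule power_int_diff[OF disjI1])
  also have "\<dots> = z ^ n / z ^ (2 * k)" by (simp only: power_int_of_nat)
  finally show ?thesis by (simp add: divide_inverse power_inverse)
qed

lemma Hcont_alt:
  assumes "0 < q" "q < 1" "z \<noteq> 0"
  shows "Hcont n q z = (\<Sum>k\<le>n. gb (complex_of_real q) n k * (z ^ n * inverse z ^ (2 * k)))"
  unfolding Hcont_def atLeast0AtMost[symmetric]
  by (rule sum.cong) (auto simp: powi_lemma[OF assms(3)] qbinom_gb[OF assms(1,2)])

lemma pure_id:
  fixes S :: complex
  assumes "S \<noteq> 0"
  shows "(S^(a+b) * inverse S^(2*a) - inverse S^(a+b)*S^(2*a))*(1 - (S^2)^(a+b))
       = (S^(a+b) - inverse S^(a+b))*((S^2)^a - (S^2)^b)"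
proof -
  define A where "A = S ^ a"
  define B where "B = S ^ b"
  have A: "A \<noteq> 0" "B \<noteq> 0" using assms by (auto simp: A_def B_def)
  have e: "S^(a+b) = A * B" "inverse S^(2*a) = inverse (A*A)" "inverse S^(a+b) = inverse (A*B)"
      "S^(2*a) = A*A" "(S^2)^(a+b) = (A*B)*(A*B)" "(S^2)^a = A*A" "(S^2)^b = B*B"
    by (simp_all add: A_def B_def power_add power_mult_distrib power_inverse mult_2 mult_2_right
        flip: power_mult)
  show ?thesis unfolding e using A by (simp add: field_simps)
qed



lemma fac_nz:
  assumes "0 < q" "q < 1"
  shows "1 - complex_of_real q * complex_of_real q ^ j \<noteq> 0"
  using qp_nz[OF assms, of "Suc j"] by (simp add: qpoch_Suc)

lemma gb_R2:
  assumes "0 < q" "q < 1" "k \<le> m"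
  shows "gb (complex_of_real q) m k * (1 - complex_of_real q ^ Suc m)
       = gb (complex_of_real q) (Suc m) (Suc k) * (1 - complex_of_real q ^ Suc k)"
proof -
  note e1 = gb_eq[OF assms]
  have le2: "Suc k \<le> Suc m" using assms by simp
  note e2 = gb_eq[OF assms(1,2) le2]
  have e3: "Suc m - Suc k = m - k" by simp
  show ?thesis unfolding e1 e2 e3 using qp_nz[OF assms(1,2)] fac_nz[OF assms(1,2)]
    by (simp add: qpoch_Suc field_simps del: gb.simps)
qed

lemma gb_R1:
  assumes "0 < q" "q < 1" "k \<le> m"
  shows "gb (complex_of_real q) m (Suc k) * (1 - complex_of_real q ^ Suc m)
       = gb (complex_of_real q) (Suc m) (Suc k) * (1 - complex_of_real q ^ (m - k))"
proof (cases "k = m")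
  case True then show ?thesis by (simp add: gb_zero)
next
  case False
  then have le: "Suc k \<le> m" using assms by simp
  have e: "m - k = Suc (m - Suc k)" using le by simp
  note e1 = gb_eq[OF assms(1,2) le]
  have le2: "Suc k \<le> Suc m" using assms by simp
  note e2 = gb_eq[OF assms(1,2) le2]
  have e3: "Suc m - Suc k = m - k" by simp
  define Q where "Q = complex_of_real q"
  define a where "a = qpoch Q Q k"
  define r where "r = 1 - Q * Q ^ k"
  define b where "b = qpoch Q Q (m - Suc k)"
  define t where "t = 1 - Q * Q ^ (m - Suc k)"
  define c where "c = qpoch Q Q m"
  have nz: "a \<noteq> 0" "r \<noteq> 0" "b \<noteq> 0" "t \<noteq> 0"
    using qp_nz[OF assms(1,2)] fac_nz[OF assms(1,2)] by (auto simp: a_def r_def b_def t_def Q_def)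
  have f: "qpoch Q Q (Suc m) = c * (1 - Q ^ Suc m)" "qpoch Q Q (Suc k) = a * r"
     "qpoch Q Q (m - k) = b * t" "1 - Q ^ (m - k) = t"
    by (simp_all add: qpoch_Suc a_def r_def b_def t_def c_def e)
  show ?thesis unfolding e1 e2 e3 unfolding Q_def[symmetric] f unfolding a_def[symmetric] b_def[symmetric] c_def[symmetric]
    using nz by (simp add: field_simps del: gb.simps)
qed

lemma coeff_id:
  assumes "0 < q" "q < 1" "k \<le> m"
  defines "Q \<equiv> complex_of_real q" and "S \<equiv> complex_of_real (sqrt q)"
  shows "gb Q (Suc m) (Suc k) * (S^(Suc m) * inverse S^(2*Suc k) - inverse S^(Suc m) * S^(2*Suc k))
       = (S^(Suc m) - inverse S^(Suc m)) * (gb Q m (Suc k) - gb Q m k)"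
proof -
  have S: "S \<noteq> 0" using assms by (simp add: S_def)
  have Q: "Q = S^2" unfolding Q_def S_def using assms
    by (simp flip: of_real_power)
  have nz: "1 - Q ^ Suc m \<noteq> 0"
  proof
    assume "1 - Q ^ Suc m = 0"
    then have "complex_of_real (q ^ Suc m) = 1" by (simp add: Q_def)
    then have "q ^ Suc m = 1" using of_real_eq_1_iff by blast
    moreover have "q ^ Suc m < 1" using assms(1,2) by (rule power_Suc_less_one)
    ultimately show False by simp
  qed
  have r1: "gb Q m (Suc k) * (1 - Q ^ Suc m) = gb Q (Suc m) (Suc k) * (1 - Q ^ (m - k))"
    unfolding Q_def by (rule gb_R1[OF assms(1-3)])
  have r2: "gb Q m k * (1 - Q ^ Suc m) = gb Q (Suc m) (Suc k) * (1 - Q ^ Suc k)"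
    unfolding Q_def by (rule gb_R2[OF assms(1-3)])
  have sm: "Suc m = Suc k + (m - k)" using assms by simp
  have p: "(S^(Suc m) * inverse S^(2*Suc k) - inverse S^(Suc m)*S^(2*Suc k))*(1 - Q^(Suc m))
       = (S^(Suc m) - inverse S^(Suc m))*(Q^(Suc k) - Q^(m-k))"
    unfolding Q sm by (rule pure_id[OF S])
  have "gb Q (Suc m) (Suc k) * (S^(Suc m) * inverse S^(2*Suc k) - inverse S^(Suc m) * S^(2*Suc k)) * (1 - Q ^ Suc m)
      = (S^(Suc m) - inverse S^(Suc m)) * (gb Q m (Suc k) - gb Q m k) * (1 - Q ^ Suc m)"
  proof -
    have "(S^(Suc m) - inverse S^(Suc m)) * (gb Q m (Suc k) - gb Q m k) * (1 - Q ^ Suc m)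
       = (S^(Suc m) - inverse S^(Suc m)) * (gb Q m (Suc k) * (1 - Q ^ Suc m) - gb Q m k * (1 - Q ^ Suc m))"
      by (simp add: algebra_simps)
    also have "\<dots> = gb Q (Suc m) (Suc k) * ((S^(Suc m) - inverse S^(Suc m))*(Q^(Suc k) - Q^(m-k)))"
      unfolding r1 r2 by (simp add: algebra_simps)
    also have "\<dots> = gb Q (Suc m) (Suc k) * ((S^(Suc m) * inverse S^(2*Suc k) - inverse S^(Suc m)*S^(2*Suc k))*(1 - Q^(Suc m)))"
      unfolding p ..
    finally show ?thesis by (simp add: algebra_simps)
  qed
  then show ?thesis using nz by simp
qed



lemma Hcont0: "Hcont 0 q z = 1"
  by (simp add: Hcont_def qbinom_def)

lemma tau_Hcont:
  assumes "0 < q" "q < 1" "z \<noteq> 0" "z^2 \<noteq> 1"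
  defines "S \<equiv> complex_of_real (sqrt q)"
  shows "tau q (Hcont m q) z = (S^m - inverse S^m) * Hcont (m - 1) q z"
proof (cases m)
  case 0 then show ?thesis by (simp add: tau_def Hcont0)
next
  case (Suc m')
  define Q where "Q = complex_of_real q"
  define T where "T = inverse S"
  define u where "u = inverse z"
  define N where "N = Suc m'"
  have S: "S \<noteq> 0" using assms by (simp add: S_def)
  have zu: "z * u = 1" using assms by (simp add: u_def)
  have den: "z - u \<noteq> 0"
  proof
    assume "z - u = 0"
    then have "z * z = z * u" by simp
    then show False using zu assms(4) by (simp add: power2_eq_square)
  qed
  have Sz: "S * z \<noteq> 0" "z / S \<noteq> 0" using S assms by auto
  have H1: "Hcont N q (S * z) - Hcont N q (z / S)
     = z ^ N * (\<Sum>k\<le>N. gb Q N k * (S^N * T^(2*k) - T^N * S^(2*k)) * u^(2*k))"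
    unfolding Hcont_alt[OF assms(1,2) Sz(1)] Hcont_alt[OF assms(1,2) Sz(2)]
    unfolding sum_subtractf[symmetric] sum_distrib_left Q_def
    by (rule sum.cong) (simp_all add: T_def u_def power_mult_distrib divide_inverse
         inverse_mult_distrib algebra_simps)
  have c: "\<And>k. k \<in> {..m'} \<Longrightarrow> gb Q N (Suc k) * (S^N * T^(2*Suc k) - T^N * S^(2*Suc k)) * u^(2*Suc k)
      = (S^N - T^N) * ((gb Q m' (Suc k) - gb Q m' k) * u^(2*Suc k))"
    unfolding N_def T_def Q_def S_def using coeff_id[OF assms(1,2)] by simp
  have H2: "(\<Sum>k\<le>N. gb Q N k * (S^N * T^(2*k) - T^N * S^(2*k)) * u^(2*k))
     = (S^N - T^N) * (1 + (\<Sum>k\<le>m'. (gb Q m' (Suc k) - gb Q m' k) * u^(2*Suc k)))"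
  proof -
    have "(\<Sum>k\<le>N. gb Q N k * (S^N * T^(2*k) - T^N * S^(2*k)) * u^(2*k))
       = (S^N - T^N) + (\<Sum>k\<le>m'. gb Q N (Suc k) * (S^N * T^(2*Suc k) - T^N * S^(2*Suc k)) * u^(2*Suc k))"
      unfolding N_def sum.atMost_Suc_shift by simp
    also have "(\<Sum>k\<le>m'. gb Q N (Suc k) * (S^N * T^(2*Suc k) - T^N * S^(2*Suc k)) * u^(2*Suc k))
       = (\<Sum>k\<le>m'. (S^N - T^N) * ((gb Q m' (Suc k) - gb Q m' k) * u^(2*Suc k)))"
      by (rule sum.cong[OF refl c])
    finally show ?thesis by (simp add: sum_distrib_left algebra_simps del: gb.simps)
  qed
  have H3: "1 + (\<Sum>k\<le>m'. gb Q m' (Suc k) * u^(2*Suc k)) = (\<Sum>k\<le>m'. gb Q m' k * u^(2*k))"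
  proof -
    have "(\<Sum>k\<le>Suc m'. gb Q m' k * u^(2*k)) = 1 + (\<Sum>k\<le>m'. gb Q m' (Suc k) * u^(2*Suc k))"
      unfolding sum.atMost_Suc_shift by (cases m') simp_all
    moreover have "(\<Sum>k\<le>Suc m'. gb Q m' k * u^(2*k)) = (\<Sum>k\<le>m'. gb Q m' k * u^(2*k))"
      by (simp add: gb_zero)
    ultimately show ?thesis by simp
  qed
  have H4: "1 + (\<Sum>k\<le>m'. (gb Q m' (Suc k) - gb Q m' k) * u^(2*Suc k))
      = (\<Sum>k\<le>m'. gb Q m' k * u^(2*k)) * (1 - u^2)"
    using H3 by (simp add: sum_subtractf left_diff_distrib sum_distrib_right sum_distrib_left algebra_simps
        power_mult power2_eq_square)
  have H5: "Hcont m' q z = z ^ m' * (\<Sum>k\<le>m'. gb Q m' k * u^(2*k))"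
    unfolding Hcont_alt[OF assms(1,2,3)] Q_def u_def sum_distrib_left
    by (rule sum.cong) (simp_all add: algebra_simps)
  have H6: "z ^ N * (1 - u^2) = (z - u) * z ^ m'"
    using zu by (simp add: N_def power2_eq_square algebra_simps)
  have "Hcont N q (S * z) - Hcont N q (z / S) = (z - u) * ((S^N - T^N) * Hcont m' q z)"
  proof -
    define G where "G = (\<Sum>k\<le>m'. gb Q m' k * u^(2*k))"
    have "z ^ N * ((S^N - T^N) * (G * (1 - u^2))) = (S^N - T^N) * G * (z ^ N * (1 - u^2))"
      by (simp only: ac_simps)
    also have "\<dots> = (z - u) * ((S^N - T^N) * (z ^ m' * G))"
      unfolding H6 by (simp only: ac_simps)
    finally show ?thesis unfolding H1 H2 H4 H5 G_def .
  qed
  then have "tau q (Hcont N q) z = (S^N - T^N) * Hcont m' q z"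
    unfolding tau_def using den by (simp add: S_def u_def mult.commute)
  then show ?thesis using Suc by (simp add: N_def T_def)
qed



definition good :: "real \<Rightarrow> complex \<Rightarrow> bool" where
  "good q z = (\<forall>j::int. complex_of_real (sqrt q) powi j * z \<noteq> 0
                 \<and> (complex_of_real (sqrt q) powi j * z)^2 \<noteq> 1)"

lemma good_shift:
  assumes "0 < q" "good q z"
  shows "good q (complex_of_real (sqrt q) * z)" "good q (z / complex_of_real (sqrt q))"
proof -
  define S where "S = complex_of_real (sqrt q)"
  have S: "S \<noteq> 0" using assms by (simp add: S_def)
  have g: "\<And>j. S powi j * z \<noteq> 0 \<and> (S powi j * z)^2 \<noteq> 1"
    using assms(2) by (simp add: good_def S_def)
  have "\<And>j. S powi j * (S * z) = S powi (j + 1) * z"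
    using S by (simp add: power_int_add)
  then show "good q (complex_of_real (sqrt q) * z)"
    using g unfolding good_def S_def[symmetric] by metis
  have "\<And>j. S powi j * (z / S) = S powi (j - 1) * z"
    using S by (simp add: power_int_diff divide_inverse)
  then show "good q (z / complex_of_real (sqrt q))"
    using g unfolding good_def S_def[symmetric] by metis
qed

lemma good_base:
  assumes "good q z"
  shows "z \<noteq> 0" "z^2 \<noteq> 1"
  using assms[unfolded good_def, rule_format, of 0] by auto

lemma tau_iter:
  assumes "0 < q" "q < 1" "good q z"
  defines "S \<equiv> complex_of_real (sqrt q)"
  shows "(tau q ^^ k) (Hcont n q) z = (\<Prod>j<k. S^(n-j) - inverse S^(n-j)) * Hcont (n - k) q z"
  using assms(3)
proof (induction k arbitrary: z)
  case 0 then show ?case by simp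
next
  case (Suc k)
  note g = good_shift[OF assms(1) Suc.prems]
  have "(tau q ^^ Suc k) (Hcont n q) z = tau q ((tau q ^^ k) (Hcont n q)) z" by simp
  also have "\<dots> = (\<Prod>j<k. S^(n-j) - inverse S^(n-j)) * tau q (Hcont (n - k) q) z"
    unfolding tau_def Suc.IH[OF g(1)] Suc.IH[OF g(2)] by (simp add: algebra_simps diff_divide_distrib)
  also have "\<dots> = (\<Prod>j<Suc k. S^(n-j) - inverse S^(n-j)) * Hcont (n - Suc k) q z"
    unfolding tau_Hcont[OF assms(1,2) good_base[OF Suc.prems]] S_def by simp
  finally show ?case .
qed

lemma good_cis:
  assumes "0 < q" "q < 1" "sin \<theta> \<noteq> 0"
  shows "good q (cis \<theta>)"
  unfolding good_def
proof (intro allI conjI)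
  fix j :: int
  define w where "w = complex_of_real (sqrt q) powi j * cis \<theta>"
  have sq: "0 < sqrt q" "sqrt q < 1" using assms by auto
  show "complex_of_real (sqrt q) powi j * cis \<theta> \<noteq> 0" using sq by simp
  show "(complex_of_real (sqrt q) powi j * cis \<theta>)^2 \<noteq> 1"
  proof
    assume h: "(complex_of_real (sqrt q) powi j * cis \<theta>)^2 = 1"
    then have "norm ((complex_of_real (sqrt q) powi j * cis \<theta>)^2) = 1" by simp
    then have "(sqrt q powi j)^2 = 1" using sq by (simp add: norm_mult norm_power norm_power_int)
    then have n1: "sqrt q powi j = 1" using sq
      by (metis power2_eq_1_iff zero_less_power_int less_numeral_extra(3) neg_0_less_iff_less
          zero_less_one order_less_trans)
    have j0: "j = 0"
    proof (rule ccontr)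
      assume "j \<noteq> 0"
      then consider "0 < j" | "j < 0" by linarith
      then show False
      proof cases
        case 1
        then have "sqrt q powi j < sqrt q powi 0" using sq by (intro power_int_strict_decreasing)
        then show False using n1 by simp
      next
        case 2
        then have "sqrt q powi 0 < sqrt q powi j" using sq by (intro power_int_strict_decreasing)
        then show False using n1 by simp
      qed
    qed
    then have "cis \<theta> ^ 2 = 1" using h by simp
    then have "cis (2 * \<theta>) = 1" by (simp add: DeMoivre)
    then have "cos (2 * \<theta>) = 1" by (metis complex.sel(1) cis.sel(1) one_complex.sel(1))
    then have "(sin \<theta>)^2 = 0" by (simp add: cos_double_sin)
    then show False using assms(3) by simp
  qed
qed



lemma tri_half: "Suc k * (Suc k - 1) div 2 = k * (k - 1) div 2 + k"
proof -
  have "Suc k * (Suc k - 1) = k * (k - 1) + 2 * k" by (cases k) (simp_all add: algebra_simps)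
  moreover have "even (k * (k - 1))" by auto
  ultimately show ?thesis by simp
qed

lemma B1:
  fixes Q :: complex
  assumes "Q \<noteq> 0" "k \<le> n"
  shows "qpoch (inverse (Q^n)) Q k * (-1)^k * inverse (Q^(k*(k-1) div 2)) * (Q^n)^k
       = (\<Prod>j<k. 1 - Q^(n-j))"
  using assms(2)
proof (induction k)
  case 0 then show ?case by simp
next
  case (Suc k)
  have IH: "qpoch (inverse (Q^n)) Q k * (-1)^k * inverse (Q^(k*(k-1) div 2)) * (Q^n)^k
       = (\<Prod>j<k. 1 - Q^(n-j))" using Suc by simp
  have e: "Q^n = Q^(n-k) * Q^k" using Suc.prems by (simp flip: power_add)
  have step: "(1 - inverse (Q^n) * Q^k) * (-1) * inverse (Q^k) * Q^n = 1 - Q^(n-k)"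
    unfolding e using assms(1) by (simp add: field_simps)
  have "qpoch (inverse (Q^n)) Q (Suc k) * (-1)^(Suc k) * inverse (Q^(Suc k*(Suc k-1) div 2)) * (Q^n)^(Suc k)
     = (qpoch (inverse (Q^n)) Q k * (-1)^k * inverse (Q^(k*(k-1) div 2)) * (Q^n)^k)
       * ((1 - inverse (Q^n) * Q^k) * (-1) * inverse (Q^k) * Q^n)"
    unfolding tri_half qpoch_Suc by (simp add: power_add algebra_simps)
  also have "\<dots> = (\<Prod>j<Suc k. 1 - Q^(n-j))" unfolding IH step by simp
  finally show ?case .
qed

lemma P2:
  fixes Q :: complex
  assumes "k \<le> n"
  shows "(\<Prod>j<k. 1 - Q^(n-j)) * qpoch Q Q (n - k) = qpoch Q Q n"
  using assms
proof (induction k)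
  case 0 then show ?case by simp
next
  case (Suc k)
  have e: "n - k = Suc (n - Suc k)" using Suc.prems by simp
  have "qpoch Q Q (n - k) = qpoch Q Q (n - Suc k) * (1 - Q^(n-k))"
    unfolding e qpoch_Suc by simp
  then have "(\<Prod>j<Suc k. 1 - Q^(n-j)) * qpoch Q Q (n - Suc k)
      = (\<Prod>j<k. 1 - Q^(n-j)) * qpoch Q Q (n - k)" by (simp only: prod.lessThan_Suc ac_simps)
  then show ?case using Suc by simp
qed

lemma gb_0[simp]: "gb Q k 0 = 1" by (cases k) simp_all

lemma QB:
  fixes Q x :: complex
  shows "qpoch x Q k = (\<Sum>j\<le>k. gb Q k j * (-x)^j * Q^(j*(j-1) div 2))"
proof (induction k)
  case 0 then show ?case by simp
next
  case (Suc k)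
  define f where "f j = gb Q k j * (-x)^j * Q^(j*(j-1) div 2)" for j
  have "(\<Sum>j\<le>Suc k. gb Q (Suc k) j * (-x)^j * Q^(j*(j-1) div 2))
      = 1 + (\<Sum>j\<le>k. gb Q (Suc k) (Suc j) * (-x)^(Suc j) * Q^(Suc j*(Suc j-1) div 2))"
    unfolding sum.atMost_Suc_shift by simp
  also have "(\<Sum>j\<le>k. gb Q (Suc k) (Suc j) * (-x)^(Suc j) * Q^(Suc j*(Suc j-1) div 2))
      = (\<Sum>j\<le>k. f (Suc j)) + (-x * Q^k) * (\<Sum>j\<le>k. f j)"
    unfolding sum_distrib_left sum.distrib[symmetric]
  proof (rule sum.cong[OF refl])
    fix j assume j: "j \<in> {..k}"
    have qe: "Q^(k-j) * Q^j = Q^k" using j by (simp flip: power_add)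
    show "gb Q (Suc k) (Suc j) * (-x)^(Suc j) * Q^(Suc j*(Suc j-1) div 2)
        = f (Suc j) + (-x * Q^k) * f j"
      unfolding f_def tri_half gb.simps qe[symmetric] by (simp add: power_add algebra_simps)
  qed
  also have "1 + ((\<Sum>j\<le>k. f (Suc j)) + (-x * Q^k) * (\<Sum>j\<le>k. f j))
      = (\<Sum>j\<le>Suc k. f j) + (-x * Q^k) * (\<Sum>j\<le>k. f j)"
    unfolding sum.atMost_Suc_shift by (simp add: f_def)
  also have "\<dots> = (\<Sum>j\<le>k. f j) + (-x * Q^k) * (\<Sum>j\<le>k. f j)" by (simp add: f_def gb_zero)
  also have "\<dots> = qpoch x Q (Suc k)"
    unfolding qpoch_Suc Suc.IH f_def by (simp add: algebra_simps)
  finally show ?case ..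
qed



lemma gb_prod:
  assumes "0 < q" "q < 1" "k \<le> n"
  shows "(\<Prod>j<k. 1 - complex_of_real q^(n-j)) / qpoch (complex_of_real q) (complex_of_real q) k
       = gb (complex_of_real q) n k"
proof -
  have "(\<Prod>j<k. 1 - complex_of_real q^(n-j))
     = qpoch (complex_of_real q) (complex_of_real q) n / qpoch (complex_of_real q) (complex_of_real q) (n - k)"
    using P2[OF assms(3), of "complex_of_real q"] qp_nz[OF assms(1,2)] by (simp add: field_simps)
  then show ?thesis unfolding gb_eq[OF assms] by simp
qed

lemma Hbig_alt:
  assumes "0 < q" "q < 1" "z \<noteq> 0"
  shows "Hbig n a q z = (\<Sum>k\<le>n. gb (complex_of_real q) n k * qpoch (a*z) (complex_of_real q) k
                                   * (z^n * inverse z^(2*k)))"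
  unfolding Hbig_def atLeast0AtMost sum_distrib_left
proof (rule sum.cong[OF refl])
  fix k assume k: "k \<in> {..n}"
  define Q where "Q = complex_of_real q"
  have Q: "Q \<noteq> 0" using assms by (simp add: Q_def)
  have b1: "qpoch (inverse (Q^n)) Q k * (-1)^k * inverse (Q^(k*(k-1) div 2)) * (Q^n)^k
       = (\<Prod>j<k. 1 - Q^(n-j))" using B1[OF Q] k by simp
  have g: "(\<Prod>j<k. 1 - Q^(n-j)) / qpoch Q Q k = gb Q n k"
    unfolding Q_def using gb_prod[OF assms(1,2)] k by simp
  have "z ^ n * (qpoch (inverse (Q ^ n)) Q k * qpoch (a * z) Q k / qpoch Q Q k * (- 1) ^ k *
          inverse (Q ^ (k * (k - 1) div 2)) * (Q ^ n * inverse (z\<^sup>2)) ^ k)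
      = (qpoch (inverse (Q^n)) Q k * (-1)^k * inverse (Q^(k*(k-1) div 2)) * (Q^n)^k) / qpoch Q Q k
         * qpoch (a*z) Q k * (z^n * inverse z^(2*k))"
    by (simp add: power_mult_distrib power_mult power_inverse power2_eq_square field_simps)
  also have "\<dots> = gb Q n k * qpoch (a*z) Q k * (z^n * inverse z^(2*k))"
    unfolding b1 g ..
  finally show "z ^ n * (qpoch (inverse (complex_of_real q ^ n)) (complex_of_real q) k * qpoch (a * z) (complex_of_real q) k / qpoch (complex_of_real q) (complex_of_real q) k * (- 1) ^ k *
          inverse (complex_of_real q ^ (k * (k - 1) div 2)) * (complex_of_real q ^ n * inverse (z\<^sup>2)) ^ k)
      = gb (complex_of_real q) n k * qpoch (a * z) (complex_of_real q) k * (z ^ n * inverse z ^ (2 * k))"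
    unfolding Q_def .
qed

lemma gb_G:
  assumes "0 < q" "q < 1" "i + l \<le> n"
  shows "gb (complex_of_real q) n (i+l) * gb (complex_of_real q) (i+l) i
       = gb (complex_of_real q) n i * gb (complex_of_real q) (n-i) l"
proof -
  have l1: "i + l \<le> n" "i \<le> i + l" "i \<le> n" "l \<le> n - i" using assms by auto
  have e: "i + l - i = l" "n - i - l = n - (i + l)" by auto
  show ?thesis
    unfolding gb_eq[OF assms(1,2) l1(1)] gb_eq[OF assms(1,2) l1(2)] gb_eq[OF assms(1,2) l1(3)]
      gb_eq[OF assms(1,2) l1(4)] e
    using qp_nz[OF assms(1,2)] by (simp add: field_simps)
qed

lemma Hbig_expand:
  assumes "0 < q" "q < 1" "z \<noteq> 0"
  defines "Q \<equiv> complex_of_real q"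
  shows "Hbig n a q z = (\<Sum>j\<le>n. gb Q n j * (-a)^j * Q^(j*(j-1) div 2) * Hcont (n-j) q z)"
proof -
  define u where "u = inverse z"
  have zu: "z * u = 1" using assms by (simp add: u_def)
  define F where "F i l = gb Q n (i+l) * gb Q (i+l) i * (-(a*z))^i * Q^(i*(i-1) div 2) * (z^n * u^(2*(i+l)))" for i l
  have "Hbig n a q z = (\<Sum>k\<le>n. \<Sum>i\<le>k. F i (k - i))"
    unfolding Hbig_alt[OF assms(1-3)] Q_def[symmetric]
  proof (rule sum.cong[OF refl])
    fix k assume k: "k \<in> {..n}"
    show "gb Q n k * qpoch (a * z) Q k * (z ^ n * inverse z ^ (2 * k)) = (\<Sum>i\<le>k. F i (k - i))"
      unfolding QB[of "a*z" Q k] sum_distrib_left sum_distrib_right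
      by (rule sum.cong[OF refl]) (auto simp: F_def u_def algebra_simps)
  qed
  also have "\<dots> = (\<Sum>(i,l)\<in>{(i,l). i + l \<le> n}. F i l)"
    by (rule sum.triangle_reindex_eq[symmetric])
  also have "{(i,l). i + l \<le> n} = Sigma {..n} (\<lambda>i. {..n-i})" by auto
  also have "(\<Sum>(i,l)\<in>Sigma {..n} (\<lambda>i. {..n-i}). F i l) = (\<Sum>i\<le>n. \<Sum>l\<le>n-i. F i l)"
    by (rule sum.Sigma[symmetric]) auto
  also have "\<dots> = (\<Sum>j\<le>n. gb Q n j * (-a)^j * Q^(j*(j-1) div 2) * Hcont (n-j) q z)"
  proof (rule sum.cong[OF refl])
    fix i assume i: "i \<in> {..n}"
    show "(\<Sum>l\<le>n-i. F i l) = gb Q n i * (-a)^i * Q^(i*(i-1) div 2) * Hcont (n-i) q z"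
      unfolding Hcont_alt[OF assms(1-3)] Q_def[symmetric] u_def[symmetric] sum_distrib_left
    proof (rule sum.cong[OF refl])
      fix l assume l: "l \<in> {..n-i}"
      have il: "i + l \<le> n" using i l by auto
      have gg: "gb Q n (i+l) * gb Q (i+l) i = gb Q n i * gb Q (n-i) l"
        unfolding Q_def by (rule gb_G[OF assms(1,2) il])
      have zz: "z^n = z^(n-i) * z^i" using i by (simp flip: power_add)
      have zui: "z^i * u^i = 1" using zu by (simp flip: power_mult_distrib)
      have "u^(2*(i+l)) = u^(i+i+2*l)" by (simp add: algebra_simps)
      then have "u^(2*(i+l)) = u^i * u^i * u^(2*l)" by (simp only: power_add)
      then have zu2: "z^i * u^(2*(i+l)) = u^i * u^(2*l)" using zui
        by (metis mult.assoc mult_1)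
      have "F i l = (gb Q n (i+l) * gb Q (i+l) i) * (-a)^i * Q^(i*(i-1) div 2) * z^i * z^(n-i)
            * (z^i * u^(2*(i+l)))"
      proof -
        have az: "(-(a*z))^i = (-a)^i * z^i" by (metis minus_mult_left power_mult_distrib)
        show ?thesis unfolding F_def zz az by (simp add: algebra_simps)
      qed
      also have "\<dots> = gb Q n i * (-a)^i * Q^(i*(i-1) div 2) * (gb Q (n-i) l * (z^(n-i) * u^(2*l)))
            * (z^i * u^i)"
        unfolding gg zu2 by (simp add: algebra_simps)
      also have "z^i * u^i = 1" using zu by (simp flip: power_mult_distrib)
      finally show "F i l = gb Q n i * (-a)^i * Q^(i*(i-1) div 2) * (gb Q (n-i) l * (z^(n-i) * u^(2*l)))"
        by simp
    qed
  qed
  finally show ?thesis .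
qed



lemma rpow:
  assumes "0 < q"
  shows "(q powr (1/4)) ^ m = q powr (real m / 4)"
proof -
  have "(q powr (1/4)) ^ m = (q powr (1/4)) powr (real m)"
    using assms by (simp add: powr_realpow)
  also have "\<dots> = q powr (real m / 4)" by (simp add: powr_powr)
  finally show ?thesis .
qed

lemma P1:
  fixes R :: complex
  assumes "R \<noteq> 0"
  shows "(\<Prod>j<k. (R^2)^(n-j) - inverse (R^2)^(n-j))
       = (-1)^k * (\<Prod>j<k. inverse R^(2*(n-j))) * (\<Prod>j<k. 1 - (R^4)^(n-j))"
proof -
  have f: "(R^2)^m - inverse (R^2)^m = (-1) * (inverse R^(2*m) * (1 - (R^4)^m))" for m
  proof -
    have "(R^2)^m = R^m * R^m" "inverse (R^2)^m = inverse (R^m) * inverse (R^m)"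
      "inverse R^(2*m) = inverse (R^m) * inverse (R^m)" "(R^4)^m = R^m*R^m*R^m*R^m"
      by (simp_all add: power_inverse flip: power_mult power_add)
        (simp_all add: algebra_simps numeral_eq_Suc power_add inverse_mult_distrib)
    then show ?thesis using assms by (simp add: field_simps)
  qed
  show ?thesis unfolding f prod.distrib by simp
qed

lemma P3:
  fixes R :: complex
  assumes "R \<noteq> 0" "k \<le> n"
  shows "R^(k^2) * (\<Prod>j<k. inverse R^(2*(n-j))) = R^k * inverse R^(2*n*k) * (R^4)^(k*(k-1) div 2)"
  using assms(2)
proof (induction k)
  case 0 then show ?case by simp
next
  case (Suc k)
  have IH: "R^(k^2) * (\<Prod>j<k. inverse R^(2*(n-j))) = R^k * inverse R^(2*n*k) * (R^4)^(k*(k-1) div 2)"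
    using Suc by simp
  have e1: "R^(Suc k ^ 2) = R^(k^2) * R^(2*k) * R"
  proof -
    have "Suc k ^ 2 = k^2 + 2*k + 1" by (simp add: power2_eq_square)
    then show ?thesis by (simp only: power_add power_one_right)
  qed
  have e2: "inverse R^(2*n*Suc k) = inverse R^(2*n*k) * inverse R^(2*(n-k)) * inverse R^(2*k)"
  proof -
    have "2*n*Suc k = 2*n*k + 2*(n-k) + 2*k" using Suc.prems by simp
    then show ?thesis by (simp only: power_add)
  qed
  have e3: "(R^4)^(Suc k*(Suc k-1) div 2) = (R^4)^(k*(k-1) div 2) * R^(2*k) * R^(2*k)"
  proof -
    have "(R^4)^(Suc k*(Suc k-1) div 2) = R^(4*(k*(k-1) div 2 + k))"
      unfolding tri_half by (simp only: power_mult)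
    also have "4*(k*(k-1) div 2 + k) = 4*(k*(k-1) div 2) + 2*k + 2*k" by simp
    also have "R^\<dots> = (R^4)^(k*(k-1) div 2) * R^(2*k) * R^(2*k)"
      by (simp only: power_add power_mult)
    finally show ?thesis .
  qed
  have e4: "R^(2*k) * inverse R^(2*k) = 1" using assms(1) by (simp add: power_inverse field_simps)
  have "R^(Suc k ^ 2) * (\<Prod>j<Suc k. inverse R^(2*(n-j)))
      = (R^(k^2) * (\<Prod>j<k. inverse R^(2*(n-j)))) * R^(2*k) * R * inverse R^(2*(n-k))"
    unfolding e1 by (simp add: algebra_simps)
  also have "\<dots> = R^(Suc k) * inverse R^(2*n*Suc k) * (R^4)^(Suc k*(Suc k-1) div 2)"
    unfolding IH e2 e3 using e4 by (simp add: algebra_simps)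
  finally show ?case .
qed



lemma coeff_main:
  assumes "0 < q" "q < 1" "k \<le> n"
  defines "R \<equiv> complex_of_real (q powr (1/4))"
  shows "R^(k^2) * \<beta>^k / qpoch (complex_of_real q) (complex_of_real q) k
           * (\<Prod>j<k. (R^2)^(n-j) - inverse (R^2)^(n-j))
       = gb (complex_of_real q) n k * (-(R * inverse R^(2*n) * \<beta>))^k
           * complex_of_real q^(k*(k-1) div 2)"
proof -
  have R: "R \<noteq> 0" using assms by (simp add: R_def)
  have Q: "complex_of_real q = R^4"
    unfolding R_def using rpow[OF assms(1), of 4] assms(1) by (simp flip: of_real_power)
  have g: "(\<Prod>j<k. 1 - (R^4)^(n-j)) / qpoch (R^4) (R^4) k = gb (R^4) n k"
    using gb_prod[OF assms(1-3)] unfolding Q .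
  have "R^(k^2) * \<beta>^k / qpoch (R^4) (R^4) k * (\<Prod>j<k. (R^2)^(n-j) - inverse (R^2)^(n-j))
      = (-1)^k * \<beta>^k * (R^(k^2) * (\<Prod>j<k. inverse R^(2*(n-j))))
          * ((\<Prod>j<k. 1 - (R^4)^(n-j)) / qpoch (R^4) (R^4) k)"
    unfolding P1[OF R] by (simp add: algebra_simps)
  also have "\<dots> = gb (R^4) n k * (-(R * inverse R^(2*n) * \<beta>))^k * (R^4)^(k*(k-1) div 2)"
    unfolding P3[OF R assms(3)] g
    by (simp add: power_mult_distrib power_minus' algebra_simps flip: power_mult)
  finally show ?thesis unfolding Q .
qed

theorem mainTheorem4:
  fixes q :: real and \<beta> :: complex and n :: nat and \<theta> :: real
  assumes "0 < q" "q < 1"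
    and "sin \<theta> \<noteq> 0"
  shows "(\<lambda>k. complex_of_real (q powr (real k ^ 2 / 4)) * \<beta> ^ k
              / qpoch (complex_of_real q) (complex_of_real q) k
              * ((tau q ^^ k) (Hcont n q)) (cis \<theta>))
         sums Hbig n (complex_of_real (q powr (- real n / 2 + 1 / 4)) * \<beta>) q (cis \<theta>)"
proof -
  define z where "z = cis \<theta>"
  define R where "R = complex_of_real (q powr (1/4))"
  define S where "S = complex_of_real (sqrt q)"
  have g: "good q z" unfolding z_def by (rule good_cis[OF assms])
  have z: "z \<noteq> 0" by (simp add: z_def)
  have SR: "S = R^2"
  proof -
    have "sqrt q = q powr (1/2)" using assms by (simp add: powr_half_sqrt)
    moreover have "(q powr (1/4))^2 = q powr (real 2 / 4)" by (rule rpow[OF assms(1)])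
    moreover have "real 2 / 4 = (1/2::real)" by simp
    ultimately have r2: "(q powr (1/4))^2 = sqrt q" by simp
    show ?thesis unfolding S_def R_def of_real_power[symmetric] r2 ..
  qed
  have pk: "complex_of_real (q powr (real k ^ 2 / 4)) = R^(k^2)" for k
  proof -
    have "(q powr (1/4))^(k^2) = q powr (real k ^ 2 / 4)"
      using rpow[OF assms(1), of "k^2"] by (simp only: of_nat_power)
    then show ?thesis unfolding R_def of_real_power[symmetric] by simp
  qed
  have pa: "complex_of_real (q powr (- real n / 2 + 1 / 4)) = R * inverse R^(2*n)"
  proof -
    have e: "- real n / 2 + 1 / 4 = 1/4 - real (2*n) / 4" by simp
    have "q powr (- real n / 2 + 1 / 4) = q powr (1/4) / q powr (real (2*n) / 4)"
      by (simp only: e powr_diff)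
    also have "\<dots> = q powr (1/4) / (q powr (1/4)) ^ (2*n)"
      by (simp only: rpow[OF assms(1)])
    finally have "complex_of_real (q powr (- real n / 2 + 1 / 4))
       = complex_of_real (q powr (1/4) / (q powr (1/4)) ^ (2*n))" by simp
    then show ?thesis unfolding R_def
      by (simp only: of_real_divide of_real_power of_real_mult of_real_inverse divide_inverse power_inverse)
  qed
  define f where "f k = complex_of_real (q powr (real k ^ 2 / 4)) * \<beta> ^ k
              / qpoch (complex_of_real q) (complex_of_real q) k
              * ((tau q ^^ k) (Hcont n q)) z" for k
  have fk: "f k = R^(k^2) * \<beta>^k / qpoch (complex_of_real q) (complex_of_real q) k
           * (\<Prod>j<k. (R^2)^(n-j) - inverse (R^2)^(n-j)) * Hcont (n - k) q z" for k
    unfolding f_def tau_iter[OF assms(1,2) g] pk S_def[symmetric] SR by (simp only: mult.assoc)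
  have f0: "f k = 0" if "k \<notin> {..n}" for k
  proof -
    have "n \<in> {..<k}" using that by simp
    have "(\<Prod>j<k. (R^2)^(n-j) - inverse (R^2)^(n-j)) = 0"
      by (rule prod_zero) (use that in \<open>auto intro!: bexI[of _ n]\<close>)
    then show ?thesis unfolding fk by simp
  qed
  have "f sums (\<Sum>k\<le>n. f k)" by (rule sums_finite) (use f0 in auto)
  also have "(\<Sum>k\<le>n. f k) = Hbig n (R * inverse R^(2*n) * \<beta>) q z"
    unfolding Hbig_expand[OF assms(1,2) z]
  proof (rule sum.cong[OF refl])
    fix k assume "k \<in> {..n}"
    then have k: "k \<le> n" by simp
    show "f k = gb (complex_of_real q) n k * (- (R * inverse R ^ (2 * n) * \<beta>)) ^ k *
           complex_of_real q ^ (k * (k - 1) div 2) * Hcont (n - k) q z"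
      unfolding fk coeff_main[OF assms(1,2) k, of \<beta>, folded R_def, symmetric] ..
  qed
  finally have fs: "f sums Hbig n (R * inverse R^(2*n) * \<beta>) q z" .
  show ?thesis unfolding pa z_def[symmetric] using fs unfolding f_def .
qed

end
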